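(* Let $k=k(n)$ and $m=m(n)$ be functions of $n$. (i) Suppose that $\frac{k^2n}{m}=\log n+\omega$, where $\omega=\omega(n)\rightarrow\infty$ as $n\rightarrow\infty$. Then asymptotically almost surely $G(n,m,k)$ contains no isolated vertex. (ii) Suppose that $\frac{k^2n}{m}=\log n-\omega$, where $\omega=\omega(n)\rightarrow\infty$ as $n\rightarrow\infty$. Then asymptotically almost surely $G(n,m,k)$ contains an isolated vertex.
   Context: The uniform random intersection graph $G(n,m,k)$ (for positive integers $k\le m$) is the random graph on a set $V$ of $n$ nodes defined as follows: fix a set $M$ of $m$ colours; to each node $v\in V$ assign a subset $F_v\subseteq M$ of exactly $k$ distinct colours, chosen uniformly at random among all $k$-subsets of $M$, independently for different nodes; distinct nodes $u,v$ are joined by an edge if and only if $F_u\cap F_v\neq\emptyset$. An event holds asymptotically almost surely if its probability tends to $1$ as $n\rightarrow\infty$. Here $\log$ denotes the natural logarithm. *)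

theory Defs
  imports "HOL-Probability.Probability"
begin

text \<open>Colours are M = {0..<m}; nodes are V = {0..<n}. A colour assignment is a function
  F with F v a k-subset of M for each node v < n (and F v = undefined elsewhere).\<close>

definition colour_sets :: "nat \<Rightarrow> nat \<Rightarrow> nat set set" where
  "colour_sets m k = {S. S \<subseteq> {0..<m} \<and> card S = k}"

definition assignments :: "nat \<Rightarrow> nat \<Rightarrow> nat \<Rightarrow> (nat \<Rightarrow> nat set) set" where
  "assignments n m k = PiE {0..<n} (\<lambda>_. colour_sets m k)"

text \<open>Uniform random intersection graph G(n,m,k): the independent uniform choices of
  k-subsets for each node amount to the uniform distribution on all assignments.\<close>
definition rig :: "nat \<Rightarrow> nat \<Rightarrow> nat \<Rightarrow> (nat \<Rightarrow> nat set) pmf" where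
  "rig n m k = pmf_of_set (assignments n m k)"

definition rig_adj :: "(nat \<Rightarrow> nat set) \<Rightarrow> nat \<Rightarrow> nat \<Rightarrow> bool" where
  "rig_adj F u v \<longleftrightarrow> u \<noteq> v \<and> F u \<inter> F v \<noteq> {}"

definition has_isolated_vertex :: "nat \<Rightarrow> (nat \<Rightarrow> nat set) \<Rightarrow> bool" where
  "has_isolated_vertex n F \<longleftrightarrow> (\<exists>v<n. \<forall>u<n. \<not> rig_adj F u v)"

end

theory Submission
  imports Defs "HOL-Real_Asymp.Real_Asymp"
begin


definition avoid :: "nat \<Rightarrow> nat \<Rightarrow> nat set \<Rightarrow> nat set set" where
  "avoid m k X = {T \<in> colour_sets m k. T \<inter> X = {}}"

definition isoset :: "nat \<Rightarrow> nat \<Rightarrow> nat \<Rightarrow> nat \<Rightarrow> (nat \<Rightarrow> nat set) set" where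
  "isoset n m k v = {F \<in> assignments n m k. \<forall>u<n. \<not> rig_adj F u v}"

lemma finite_colour_sets: "finite (colour_sets m k)"
  unfolding colour_sets_def by (rule finite_subset[of _ "Pow {0..<m}"]) auto

lemma card_colour_sets: "card (colour_sets m k) = m choose k"
  unfolding colour_sets_def using n_subsets[of "{0..<m}" k] by simp

lemma card_avoid:
  assumes "X \<subseteq> {0..<m}"
  shows "card (avoid m k X) = (m - card X) choose k"
proof -
  have "avoid m k X = {T. T \<subseteq> {0..<m} - X \<and> card T = k}"
    unfolding avoid_def colour_sets_def by auto
  moreover have "card ({0..<m} - X) = m - card X"
    using assms by (simp add: card_Diff_subset finite_subset)
  ultimately show ?thesis using n_subsets[of "{0..<m} - X" k] by simp
qed

lemma finite_assignments: "finite (assignments n m k)"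
  unfolding assignments_def by (intro finite_PiE finite_colour_sets) auto

lemma card_assignments: "card (assignments n m k) = (m choose k) ^ n"
  unfolding assignments_def by (simp add: card_PiE card_colour_sets)

lemma isoset_eq:
  assumes "v < n"
  shows "isoset n m k v = (\<Union>S\<in>colour_sets m k.
     PiE {0..<n} (\<lambda>u. if u = v then {S} else avoid m k S))"
proof (rule set_eqI, rule iffI)
  fix F assume F: "F \<in> isoset n m k v"
  then have Fa: "F \<in> PiE {0..<n} (\<lambda>_. colour_sets m k)" and iso: "\<forall>u<n. \<not> rig_adj F u v"
    unfolding isoset_def assignments_def by auto
  have "F v \<in> colour_sets m k" using Fa assms by (auto simp: PiE_iff)
  moreover have "F \<in> PiE {0..<n} (\<lambda>u. if u = v then {F v} else avoid m k (F v))"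
    using Fa iso unfolding PiE_iff avoid_def rig_adj_def by auto
  ultimately show "F \<in> (\<Union>S\<in>colour_sets m k. PiE {0..<n} (\<lambda>u. if u = v then {S} else avoid m k S))"
    by blast
next
  fix F assume "F \<in> (\<Union>S\<in>colour_sets m k. PiE {0..<n} (\<lambda>u. if u = v then {S} else avoid m k S))"
  then obtain S where S: "S \<in> colour_sets m k"
    and F: "F \<in> PiE {0..<n} (\<lambda>u. if u = v then {S} else avoid m k S)" by blast
  have Fall: "\<forall>i\<in>{0..<n}. F i \<in> (if i = v then {S} else avoid m k S)" using F by (simp add: PiE_iff)
  then have "F v \<in> {S}" using assms by (metis atLeastLessThan_iff le0)
  then have Fv: "F v = S" by simp
  have "F \<in> assignments n m k"
    unfolding assignments_def PiE_iff
  proof (intro conjI ballI)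
    fix u assume "u \<in> {0..<n}"
    then have "F u \<in> (if u = v then {S} else avoid m k S)" using Fall by blast
    then show "F u \<in> colour_sets m k" using S by (cases "u = v") (auto simp: avoid_def)
  next
    show "F \<in> extensional {0..<n}" using F by (simp add: PiE_iff)
  qed
  moreover have "\<forall>u<n. \<not> rig_adj F u v"
  proof (intro allI impI)
    fix u assume "u < n"
    then have "F u \<in> (if u = v then {S} else avoid m k S)" using Fall by auto
    then show "\<not> rig_adj F u v" using Fv unfolding rig_adj_def
      by (cases "u = v") (auto simp: avoid_def Int_commute)
  qed
  ultimately show "F \<in> isoset n m k v" unfolding isoset_def by blast
qed

lemma card_isoset:
  assumes "v < n"
  shows "card (isoset n m k v) = (m choose k) * ((m - k) choose k) ^ (n - 1)"
proof -
  have "card (isoset n m k v) = (\<Sum>S\<in>colour_sets m k.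
     card (PiE {0..<n} (\<lambda>u. if u = v then {S} else avoid m k S)))"
    unfolding isoset_eq[OF assms]
  proof (rule card_UN_disjoint[OF finite_colour_sets])
    show "\<forall>S\<in>colour_sets m k. finite (PiE {0..<n} (\<lambda>u. if u = v then {S} else avoid m k S))"
      by (auto intro!: finite_PiE simp: avoid_def intro: finite_subset[OF _ finite_colour_sets])
    show "\<forall>S\<in>colour_sets m k. \<forall>T\<in>colour_sets m k. S \<noteq> T \<longrightarrow>
       PiE {0..<n} (\<lambda>u. if u = v then {S} else avoid m k S) \<inter> PiE {0..<n} (\<lambda>u. if u = v then {T} else avoid m k T) = {}"
    proof (intro ballI impI)
      fix S T :: "nat set" assume "S \<noteq> T"
      show "PiE {0..<n} (\<lambda>u. if u = v then {S} else avoid m k S) \<inter> PiE {0..<n} (\<lambda>u. if u = v then {T} else avoid m k T) = {}"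
      proof (rule ccontr)
        assume "\<not> ?thesis"
        then obtain F where F1: "F \<in> PiE {0..<n} (\<lambda>u. if u = v then {S} else avoid m k S)"
          and F2: "F \<in> PiE {0..<n} (\<lambda>u. if u = v then {T} else avoid m k T)" by blast
        have "F v \<in> (if v = v then {S} else avoid m k S)" using PiE_mem[OF F1, of v] assms by simp
        moreover have "F v \<in> (if v = v then {T} else avoid m k T)" using PiE_mem[OF F2, of v] assms by simp
        ultimately show False using \<open>S \<noteq> T\<close> by simp
      qed
    qed
  qed
  also have "\<dots> = (\<Sum>S\<in>colour_sets m k. ((m - k) choose k) ^ (n - 1))"
  proof (rule sum.cong[OF refl])
    fix S assume S: "S \<in> colour_sets m k"
    have "card (PiE {0..<n} (\<lambda>u. if u = v then {S} else avoid m k S))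
        = (\<Prod>u\<in>{0..<n}. card (if u = v then {S} else avoid m k S))"
      by (simp add: card_PiE)
    also have "\<dots> = card {S} * (\<Prod>u\<in>{0..<n} - {v}. card (if u = v then {S} else avoid m k S))"
      using assms by (subst prod.remove[of _ v]) auto
    also have "\<dots> = (\<Prod>u\<in>{0..<n} - {v}. (m - k) choose k)"
    proof -
      have "(\<Prod>u\<in>{0..<n} - {v}. card (if u = v then {S} else avoid m k S)) = (\<Prod>u\<in>{0..<n} - {v}. (m - k) choose k)"
        by (rule prod.cong[OF refl]) (use S in \<open>auto simp: card_avoid colour_sets_def\<close>)
      then show ?thesis by simp
    qed
    also have "\<dots> = ((m - k) choose k) ^ (n - 1)"
      using assms by simp
    finally show "card (PiE {0..<n} (\<lambda>u. if u = v then {S} else avoid m k S)) = ((m - k) choose k) ^ (n - 1)" .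
  qed
  also have "\<dots> = (m choose k) * ((m - k) choose k) ^ (n - 1)"
    by (simp add: card_colour_sets)
  finally show ?thesis .
qed

lemma isoset_pair_subset:
  assumes "u < n" "v < n" "u \<noteq> v"
  shows "isoset n m k u \<inter> isoset n m k v \<subseteq> (\<Union>S\<in>colour_sets m k. \<Union>T\<in>avoid m k S.
     PiE {0..<n} (\<lambda>w. if w = u then {S} else if w = v then {T} else avoid m k (S \<union> T)))"
proof
  fix F assume F: "F \<in> isoset n m k u \<inter> isoset n m k v"
  then have Fa: "F \<in> PiE {0..<n} (\<lambda>_. colour_sets m k)" and iu: "\<forall>w<n. \<not> rig_adj F w u"
    and iv: "\<forall>w<n. \<not> rig_adj F w v"
    unfolding isoset_def assignments_def by auto
  have cs: "\<And>w. w < n \<Longrightarrow> F w \<in> colour_sets m k" using Fa by (auto simp: PiE_iff)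
  have "F v \<in> avoid m k (F u)" using cs[OF assms(2)] iu assms unfolding avoid_def rig_adj_def by auto
  moreover have "F \<in> PiE {0..<n} (\<lambda>w. if w = u then {F u} else if w = v then {F v} else avoid m k (F u \<union> F v))"
    unfolding PiE_iff
  proof (intro conjI ballI)
    show "F \<in> extensional {0..<n}" using Fa by (simp add: PiE_iff)
    fix w assume "w \<in> {0..<n}"
    then show "F w \<in> (if w = u then {F u} else if w = v then {F v} else avoid m k (F u \<union> F v))"
      using cs iu iv unfolding avoid_def rig_adj_def by auto
  qed
  ultimately show "F \<in> (\<Union>S\<in>colour_sets m k. \<Union>T\<in>avoid m k S.
     PiE {0..<n} (\<lambda>w. if w = u then {S} else if w = v then {T} else avoid m k (S \<union> T)))"
    using cs[OF assms(1)] by blast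
qed

lemma card_isoset_pair:
  assumes "u < n" "v < n" "u \<noteq> v"
  shows "card (isoset n m k u \<inter> isoset n m k v) \<le>
     (m choose k) * ((m - k) choose k) * ((m - 2 * k) choose k) ^ (n - 2)"
proof -
  let ?P = "\<lambda>S T. PiE {0..<n} (\<lambda>w. if w = u then {S} else if w = v then {T} else avoid m k (S \<union> T))"
  have fin: "finite (\<Union>S\<in>colour_sets m k. \<Union>T\<in>avoid m k S. ?P S T)"
    by (intro finite_UN_I finite_colour_sets finite_PiE)
       (auto simp: avoid_def intro: finite_subset[OF _ finite_colour_sets])
  have "card (isoset n m k u \<inter> isoset n m k v) \<le> card (\<Union>S\<in>colour_sets m k. \<Union>T\<in>avoid m k S. ?P S T)"
    by (rule card_mono[OF fin isoset_pair_subset[OF assms]])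
  also have "\<dots> \<le> (\<Sum>S\<in>colour_sets m k. card (\<Union>T\<in>avoid m k S. ?P S T))"
    by (rule card_UN_le[OF finite_colour_sets])
  also have "\<dots> \<le> (\<Sum>S\<in>colour_sets m k. \<Sum>T\<in>avoid m k S. card (?P S T))"
    by (intro sum_mono card_UN_le) (auto simp: avoid_def intro: finite_subset[OF _ finite_colour_sets])
  also have "\<dots> = (\<Sum>S\<in>colour_sets m k. \<Sum>T\<in>avoid m k S. ((m - 2 * k) choose k) ^ (n - 2))"
  proof (intro sum.cong refl)
    fix S T assume S: "S \<in> colour_sets m k" and T: "T \<in> avoid m k S"
    have cSU: "card (S \<union> T) = 2 * k" and sub: "S \<union> T \<subseteq> {0..<m}"
      using S T unfolding avoid_def colour_sets_def
      by (auto simp: finite_subset card_Un_disjoint[of S T] Int_commute)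
    have "card (?P S T) = (\<Prod>w\<in>{0..<n}. card (if w = u then {S} else if w = v then {T} else avoid m k (S \<union> T)))"
      by (simp add: card_PiE)
    also have "\<dots> = (\<Prod>w\<in>{0..<n} - {u} - {v}. card (if w = u then {S} else if w = v then {T} else avoid m k (S \<union> T)))"
      using assms by (subst prod.remove[of _ u], simp, simp, subst prod.remove[of _ v]) auto
    also have "\<dots> = (\<Prod>w\<in>{0..<n} - {u} - {v}. (m - 2 * k) choose k)"
      by (rule prod.cong[OF refl]) (auto simp: card_avoid[OF sub] cSU)
    also have "\<dots> = ((m - 2 * k) choose k) ^ (n - 2)"
      using assms by (simp add: card_Diff_subset numeral_2_eq_2)
    finally show "card (?P S T) = ((m - 2 * k) choose k) ^ (n - 2)" .
  qed
  also have "\<dots> = (m choose k) * ((m - k) choose k) * ((m - 2 * k) choose k) ^ (n - 2)"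
  proof -
    have "\<And>S. S \<in> colour_sets m k \<Longrightarrow> card (avoid m k S) = (m - k) choose k"
      by (subst card_avoid) (auto simp: colour_sets_def)
    then show ?thesis by (simp add: card_colour_sets)
  qed
  finally show ?thesis .
qed

lemma isoset_subset: "isoset n m k v \<subseteq> assignments n m k"
  unfolding isoset_def by auto

lemma H_eq: "assignments n m k \<inter> {F. has_isolated_vertex n F} = (\<Union>v\<in>{0..<n}. isoset n m k v)"
  unfolding isoset_def has_isolated_vertex_def by auto

lemma isoset_H: "v < n \<Longrightarrow> F \<in> isoset n m k v \<Longrightarrow> has_isolated_vertex n F"
  unfolding isoset_def has_isolated_vertex_def by auto

lemma first_moment:
  "card (assignments n m k \<inter> {F. has_isolated_vertex n F}) \<le> n * ((m choose k) * ((m - k) choose k) ^ (n - 1))"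
proof -
  have "card (assignments n m k \<inter> {F. has_isolated_vertex n F}) \<le> (\<Sum>v\<in>{0..<n}. card (isoset n m k v))"
    unfolding H_eq by (rule card_UN_le) simp
  also have "\<dots> = (\<Sum>v\<in>{0..<n}. (m choose k) * ((m - k) choose k) ^ (n - 1))"
    by (rule sum.cong) (auto simp: card_isoset)
  finally show ?thesis by simp
qed

lemma sum_ind: "finite A \<Longrightarrow> (\<Sum>F\<in>A. (if F \<in> B then 1 else 0 :: real)) = real (card (A \<inter> B))"
  by (simp add: sum.inter_restrict[symmetric])

lemma second_moment:
  fixes n m k :: nat
  assumes "n \<ge> 2"
  defines "N \<equiv> real (m choose k)" and "N1 \<equiv> real ((m - k) choose k)" and "N2 \<equiv> real ((m - 2 * k) choose k)"
  shows "(real n * (N * N1 ^ (n - 1)))\<^sup>2 \<le> real (card (assignments n m k \<inter> {F. has_isolated_vertex n F}))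
           * (real n * (N * N1 ^ (n - 1)) + real n * (real n - 1) * (N * N1 * N2 ^ (n - 2)))"
proof -
  let ?\<Omega> = "assignments n m k"
  let ?H = "{F. has_isolated_vertex n F}"
  let ?E = "\<lambda>v. isoset n m k v"
  let ?I = "{0..<n}"
  define ind where "ind v F = (if F \<in> ?E v then 1 else 0 :: real)" for v F
  define X where "X F = (\<Sum>v\<in>?I. ind v F)" for F
  have fin: "finite ?\<Omega>" by (rule finite_assignments)
  have S1: "(\<Sum>F\<in>?\<Omega>. X F) = real n * (N * N1 ^ (n - 1))"
  proof -
    have "(\<Sum>F\<in>?\<Omega>. X F) = (\<Sum>v\<in>?I. \<Sum>F\<in>?\<Omega>. ind v F)"
      unfolding X_def by (rule sum.swap)
    also have "\<dots> = (\<Sum>v\<in>?I. real (card (?E v)))"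
    proof (intro sum.cong refl)
      fix v
      have "?\<Omega> \<inter> ?E v = ?E v" using isoset_subset[of n m k v] by blast
      then show "(\<Sum>F\<in>?\<Omega>. ind v F) = real (card (?E v))" unfolding ind_def using sum_ind[OF fin, of "?E v"] by simp
    qed
    also have "\<dots> = (\<Sum>v\<in>?I. N * N1 ^ (n - 1))"
      by (intro sum.cong refl) (simp add: card_isoset N_def N1_def)
    finally show ?thesis by simp
  qed
  have XH: "X F = (if F \<in> ?H then 1 else 0) * X F" if "F \<in> ?\<Omega>" for F
  proof (cases "F \<in> ?H")
    case False
    then have "\<And>v. v \<in> ?I \<Longrightarrow> ind v F = 0"
      using isoset_H[of _ n F m k] unfolding ind_def by fastforce
    then show ?thesis unfolding X_def by simp
  qed simp
  have CS: "(\<Sum>F\<in>?\<Omega>. X F)\<^sup>2 \<le> real (card (?\<Omega> \<inter> ?H)) * (\<Sum>F\<in>?\<Omega>. (X F)\<^sup>2)"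
  proof -
    have "(\<Sum>F\<in>?\<Omega>. X F) = (\<Sum>F\<in>?\<Omega>. (if F \<in> ?H then 1 else 0) * X F)"
      using XH by (intro sum.cong) auto
    also have "(\<dots>)\<^sup>2 \<le> (\<Sum>F\<in>?\<Omega>. (if F \<in> ?H then 1 else 0 :: real)\<^sup>2) * (\<Sum>F\<in>?\<Omega>. (X F)\<^sup>2)"
      by (rule Cauchy_Schwarz_ineq_sum)
    also have "(\<Sum>F\<in>?\<Omega>. (if F \<in> ?H then 1 else 0 :: real)\<^sup>2) = real (card (?\<Omega> \<inter> ?H))"
    proof -
      have "(\<Sum>F\<in>?\<Omega>. (if F \<in> ?H then 1 else 0 :: real)\<^sup>2) = (\<Sum>F\<in>?\<Omega>. (if F \<in> ?H then 1 else 0 :: real))"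
        by (rule sum.cong) auto
      then show ?thesis using sum_ind[OF fin, of ?H] by simp
    qed
    finally show ?thesis by simp
  qed
  have S2: "(\<Sum>F\<in>?\<Omega>. (X F)\<^sup>2) = (\<Sum>u\<in>?I. \<Sum>v\<in>?I. real (card (?E u \<inter> ?E v)))"
  proof -
    have "(\<Sum>F\<in>?\<Omega>. (X F)\<^sup>2) = (\<Sum>F\<in>?\<Omega>. \<Sum>u\<in>?I. \<Sum>v\<in>?I. ind u F * ind v F)"
      unfolding X_def power2_eq_square sum_product by simp
    also have "\<dots> = (\<Sum>u\<in>?I. \<Sum>F\<in>?\<Omega>. \<Sum>v\<in>?I. ind u F * ind v F)"
      by (rule sum.swap)
    also have "\<dots> = (\<Sum>u\<in>?I. \<Sum>v\<in>?I. \<Sum>F\<in>?\<Omega>. ind u F * ind v F)"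
      by (intro sum.cong refl sum.swap)
    also have "\<dots> = (\<Sum>u\<in>?I. \<Sum>v\<in>?I. real (card (?E u \<inter> ?E v)))"
    proof (intro sum.cong refl)
      fix u v
      have "(\<Sum>F\<in>?\<Omega>. ind u F * ind v F) = (\<Sum>F\<in>?\<Omega>. if F \<in> ?E u \<inter> ?E v then 1 else 0)"
        unfolding ind_def by (intro sum.cong) auto
      also have "\<dots> = real (card (?E u \<inter> ?E v))"
      proof -
        have "?\<Omega> \<inter> (?E u \<inter> ?E v) = ?E u \<inter> ?E v" using isoset_subset[of n m k u] by blast
        then show ?thesis using sum_ind[OF fin, of "?E u \<inter> ?E v"] by simp
      qed
      finally show "(\<Sum>F\<in>?\<Omega>. ind u F * ind v F) = real (card (?E u \<inter> ?E v))" .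
    qed
    finally show ?thesis .
  qed
  have S2b: "(\<Sum>u\<in>?I. \<Sum>v\<in>?I. real (card (?E u \<inter> ?E v)))
      \<le> real n * (N * N1 ^ (n - 1)) + real n * (real n - 1) * (N * N1 * N2 ^ (n - 2))"
  proof -
    have "(\<Sum>u\<in>?I. \<Sum>v\<in>?I. real (card (?E u \<inter> ?E v)))
       = (\<Sum>u\<in>?I. real (card (?E u)) + (\<Sum>v\<in>?I - {u}. real (card (?E u \<inter> ?E v))))"
      by (intro sum.cong refl) (simp add: sum.remove)
    also have "\<dots> \<le> (\<Sum>u\<in>?I. N * N1 ^ (n - 1) + (\<Sum>v\<in>?I - {u}. N * N1 * N2 ^ (n - 2)))"
    proof (intro sum_mono add_mono)
      fix u v assume u: "u \<in> ?I" and v: "v \<in> ?I - {u}"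
      show "real (card (?E u \<inter> ?E v)) \<le> N * N1 * N2 ^ (n - 2)"
        using of_nat_mono[OF card_isoset_pair[of u n v m k], where 'a=real] u v unfolding N_def N1_def N2_def
        by simp
    next
      fix u assume u: "u \<in> ?I"
      show "real (card (?E u)) \<le> N * N1 ^ (n - 1)"
        using u by (simp add: card_isoset N_def N1_def)
    qed
    also have "\<dots> = real n * (N * N1 ^ (n - 1)) + real n * (real n - 1) * (N * N1 * N2 ^ (n - 2))"
      using assms(1) by (simp add: sum.distrib of_nat_diff algebra_simps)
    finally show ?thesis .
  qed
  have pos: "0 \<le> real (card (?\<Omega> \<inter> ?H))" by simp
  show ?thesis
    using CS S1 S2 S2b mult_left_mono[OF S2b pos] by simp
qed



lemma choose_real_prod: "real (a choose k) = (\<Prod>i<k. real a - real i) / fact k"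
  by (simp add: binomial_gbinomial gbinomial_prod_rev atLeast0LessThan)

lemma ratio_prod:
  assumes "k \<le> m" "j \<le> m"
  shows "real ((m - j) choose k) / real (m choose k) = (\<Prod>i<k. (real m - real j - real i) / (real m - real i))"
proof -
  have nz: "(\<Prod>i<k. real m - real i) \<noteq> 0" using assms by (auto simp: prod_zero_iff)
  have "real ((m - j) choose k) / real (m choose k) = (\<Prod>i<k. real m - real j - real i) / (\<Prod>i<k. real m - real i)"
    using assms nz by (simp add: choose_real_prod of_nat_diff)
  also have "\<dots> = (\<Prod>i<k. (real m - real j - real i) / (real m - real i))"
    by (simp add: prod_dividef)
  finally show ?thesis .
qed

lemma p_upper:
  assumes "1 \<le> k" "k \<le> m"
  shows "0 \<le> real ((m - k) choose k) / real (m choose k)"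
    and "real ((m - k) choose k) / real (m choose k) \<le> exp (- (real k ^ 2 / real m))"
proof -
  show "0 \<le> real ((m - k) choose k) / real (m choose k)" by simp
  have m0: "real m > 0" using assms by simp
  have "real ((m - k) choose k) / real (m choose k) \<le> (1 - real k / real m) ^ k"
  proof (cases "2 * k \<le> m")
    case False
    then have z: "(m - k) choose k = 0" by (simp add: binomial_eq_0)
    have "0 \<le> 1 - real k / real m" using assms m0 by (simp add: divide_le_eq)
    then show ?thesis unfolding z by simp
  next
    case True
    have "real ((m - k) choose k) / real (m choose k) = (\<Prod>i<k. (real m - real k - real i) / (real m - real i))"
      by (rule ratio_prod[OF assms(2) assms(2)])
    also have "\<dots> \<le> (\<Prod>i<k. 1 - real k / real m)"
    proof (rule prod_mono)
      fix i assume i: "i \<in> {..<k}"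
      then have pos: "real m - real i > 0" using assms by simp
      have "0 \<le> real m - real k - real i" using True i by simp
      moreover have "(real m - real k - real i) / (real m - real i) = 1 - real k / (real m - real i)"
        using pos by (simp add: field_simps)
      moreover have "real k / real m \<le> real k / (real m - real i)"
        using pos by (intro divide_left_mono) auto
      ultimately show "0 \<le> (real m - real k - real i) / (real m - real i) \<and>
          (real m - real k - real i) / (real m - real i) \<le> 1 - real k / real m"
        using pos by simp
    qed
    also have "\<dots> = (1 - real k / real m) ^ k" by simp
    finally show ?thesis .
  qed
  also have "\<dots> \<le> exp (- (real k / real m)) ^ k"
  proof (rule power_mono)
    show "1 - real k / real m \<le> exp (- (real k / real m))"
      using exp_ge_add_one_self[of "- (real k / real m)"] by simp
    show "0 \<le> 1 - real k / real m" using assms m0 by (simp add: divide_le_eq)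
  qed
  also have "\<dots> = exp (- (real k ^ 2 / real m))"
    by (simp add: exp_of_nat_mult[symmetric] power2_eq_square)
  finally show "real ((m - k) choose k) / real (m choose k) \<le> exp (- (real k ^ 2 / real m))" .
qed

lemma p_lower:
  assumes "1 \<le> k" "2 * k \<le> m"
  shows "(1 - real k / (real m - real k)) ^ k \<le> real ((m - k) choose k) / real (m choose k)"
proof -
  have "(1 - real k / (real m - real k)) ^ k = (\<Prod>i<k. 1 - real k / (real m - real k))" by simp
  also have "\<dots> \<le> (\<Prod>i<k. (real m - real k - real i) / (real m - real i))"
  proof (rule prod_mono)
    fix i assume i: "i \<in> {..<k}"
    then have pos: "real m - real i > 0" using assms by simp
    have mk: "real m - real k > 0" using assms by simp
    have "(real m - real k - real i) / (real m - real i) = 1 - real k / (real m - real i)"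
      using pos by (simp add: field_simps)
    moreover have "real k / (real m - real i) \<le> real k / (real m - real k)"
      using pos mk i by (intro divide_left_mono) auto
    moreover have "real k / (real m - real k) \<le> 1" using mk assms by (simp add: divide_le_eq)
    ultimately show "0 \<le> 1 - real k / (real m - real k) \<and>
        1 - real k / (real m - real k) \<le> (real m - real k - real i) / (real m - real i)"
      by simp
  qed
  also have "\<dots> = real ((m - k) choose k) / real (m choose k)"
    using assms by (intro ratio_prod[symmetric]) auto
  finally show ?thesis .
qed

lemma q_le_p2:
  assumes "1 \<le> k" "k \<le> m"
  shows "real ((m - 2 * k) choose k) / real (m choose k) \<le> (real ((m - k) choose k) / real (m choose k))\<^sup>2"
proof (cases "3 * k \<le> m")
  case False
  then have z: "(m - 2 * k) choose k = 0" by (simp add: binomial_eq_0)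
  show ?thesis unfolding z by simp
next
  case True
  have "real ((m - 2 * k) choose k) / real (m choose k) = (\<Prod>i<k. (real m - real (2 * k) - real i) / (real m - real i))"
    using assms True by (intro ratio_prod) auto
  also have "\<dots> \<le> (\<Prod>i<k. ((real m - real k - real i) / (real m - real i))\<^sup>2)"
  proof (rule prod_mono)
    fix i assume i: "i \<in> {..<k}"
    then have pos: "real m - real i > 0" using assms by simp
    define y where "y = real m - real i"
    define a where "a = real m - real (2 * k) - real i"
    define b where "b = real m - real k - real i"
    have y0: "y > 0" using pos y_def by simp
    have a0: "0 \<le> a" using True i a_def by simp
    have ab: "a * y \<le> b\<^sup>2"
      unfolding a_def b_def y_def by (simp add: power2_eq_square algebra_simps)
    have "a / y = (a * y) / y\<^sup>2" using y0 by (simp add: power2_eq_square)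
    also have "\<dots> \<le> b\<^sup>2 / y\<^sup>2" using ab by (intro divide_right_mono) auto
    also have "\<dots> = (b / y)\<^sup>2" by (simp add: power_divide)
    finally have "a / y \<le> (b / y)\<^sup>2" .
    moreover have "0 \<le> a / y" using a0 y0 by simp
    ultimately show "0 \<le> (real m - real (2 * k) - real i) / (real m - real i) \<and>
        (real m - real (2 * k) - real i) / (real m - real i) \<le> ((real m - real k - real i) / (real m - real i))\<^sup>2"
      unfolding a_def b_def y_def by simp
  qed
  also have "\<dots> = (\<Prod>i<k. (real m - real k - real i) / (real m - real i))\<^sup>2"
    by (simp add: prod_power_distrib)
  also have "\<dots> = (real ((m - k) choose k) / real (m choose k))\<^sup>2"
    using assms by (simp add: ratio_prod)
  finally show ?thesis .
qed



lemma bound_i: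
  fixes p s :: real and n :: nat
  assumes "0 \<le> p" "p \<le> exp (- s)" "n \<ge> 1" "s \<ge> 0"
  shows "real n * p ^ (n - 1) \<le> exp 1 * exp (- (real n * s - ln (real n))) + real n * exp (- (real n - 1))"
proof -
  have "p ^ (n - 1) \<le> exp (- s) ^ (n - 1)" using assms by (intro power_mono) auto
  also have "\<dots> = exp (- s * (real n - 1))"
    using assms(3) by (simp add: exp_of_nat_mult[symmetric] of_nat_diff mult.commute)
  finally have pb: "p ^ (n - 1) \<le> exp (- s * (real n - 1))" .
  have n0: "real n > 0" using assms by simp
  show ?thesis
  proof (cases "s \<le> 1")
    case True
    have "exp (- s * (real n - 1)) \<le> exp (1 - real n * s)"
      using True by (simp add: algebra_simps)
    also have "\<dots> = exp 1 * exp (- (real n * s)) " by (simp add: exp_diff exp_minus field_simps)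
    finally have "real n * p ^ (n - 1) \<le> real n * (exp 1 * exp (- (real n * s)))"
      using pb n0 by (meson mult_left_mono less_imp_le order_trans)
    also have "\<dots> = exp 1 * exp (- (real n * s - ln (real n)))"
      using n0 by (simp add: exp_diff exp_minus field_simps)
    finally show ?thesis by (smt (verit) mult_nonneg_nonneg exp_ge_zero of_nat_0_le_iff)
  next
    case False
    have "exp (- s * (real n - 1)) \<le> exp (- (real n - 1))"
    proof -
      have "1 * (real n - 1) \<le> s * (real n - 1)" using False assms(3) by (intro mult_right_mono) auto
      then show ?thesis by simp
    qed
    with pb have "real n * p ^ (n - 1) \<le> real n * exp (- (real n - 1))"
      using n0 by (meson mult_left_mono less_imp_le order_trans)
    then show ?thesis by (smt (verit) mult_nonneg_nonneg exp_ge_zero)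
  qed
qed

lemma real_facts:
  fixes K M L Nn :: real
  assumes K1: "K \<ge> 1" and KM: "K \<le> M" and N2: "Nn \<ge> 2"
    and r: "K^2 * Nn / M \<le> L" and L: "L / Nn \<le> 1/4" and L0: "L \<ge> 0"
  defines "x \<equiv> K / (M - K)"
  shows "x \<le> 1/3" "0 \<le> x" "K * x \<le> 2 * (L / Nn)" "4 * K \<le> M"
    "K * Nn * (x + 2 * x^2) \<le> K^2 * Nn / M + 6 * (L^2 / Nn)"
proof -
  have M0: "M > 0" using K1 KM by simp
  have Nn0: "Nn > 0" using N2 by simp
  define s where "s = K^2 / M"
  define t where "t = K / M"
  have sL: "s \<le> L / Nn" using r Nn0 unfolding s_def by (simp add: field_simps)
  have ts: "t \<le> s" unfolding t_def s_def using K1 M0 by (intro divide_right_mono) (auto simp: power2_eq_square)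
  have t4: "t \<le> 1/4" using ts sL L by linarith
  then show "4 * K \<le> M" unfolding t_def using M0 by (simp add: field_simps)
  have t0: "t \<ge> 0" unfolding t_def using K1 M0 by simp
  have xt: "x = t / (1 - t)" unfolding x_def t_def using M0 K1 KM t4
    by (simp add: field_simps t_def)
  have x43: "x \<le> 4/3 * t"
  proof -
    have "t * (t * 4) \<le> t * 1" using t4 t0 by (intro mult_left_mono) auto
    then show ?thesis unfolding xt using t4 t0 by (simp add: field_simps)
  qed
  show x0: "0 \<le> x" unfolding xt using t4 t0 by simp
  show x13: "x \<le> 1/3" using x43 t4 by simp
  have Kx: "K * x = s / (1 - t)" unfolding xt s_def t_def using t4 M0
    by (simp add: field_simps power2_eq_square t_def)
  have s0: "s \<ge> 0" using ts t0 by simp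
  have LN0: "L / Nn \<ge> 0" using L0 Nn0 by simp
  have "K * x = s / (1 - t)" by (rule Kx)
  also have "\<dots> \<le> s / (3/4)" using t4 t0 ts s0
    by (intro divide_left_mono) auto
  also have "\<dots> = 4/3 * s" by simp
  also have "\<dots> \<le> 4/3 * (L / Nn)" using sL by simp
  also have "\<dots> \<le> 2 * (L / Nn)" using LN0 by simp
  finally show "K * x \<le> 2 * (L / Nn)" .
  define r where "r = K^2 * Nn / M"
  have r0: "r \<ge> 0" unfolding r_def using M0 Nn0 by simp
  have rx: "K * Nn * x = r * (1 + x)"
    unfolding r_def x_def using M0 K1 KM t4 \<open>4 * K \<le> M\<close>
    by (simp add: field_simps power2_eq_square)
  have xL: "x \<le> 4/3 * (L / Nn)" using x43 ts sL by simp
  have eq: "K * Nn * (x + 2 * x^2) = r + r * x * (3 + 2 * x)"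
  proof -
    have "K * Nn * (x + 2 * x^2) = (K * Nn * x) * (1 + 2 * x)" by (simp add: algebra_simps power2_eq_square)
    also have "\<dots> = r * (1 + x) * (1 + 2 * x)" using rx by simp
    finally show ?thesis by (simp add: algebra_simps)
  qed
  have "r * x * (3 + 2 * x) \<le> L * (4/3 * (L / Nn)) * 4"
    using r x0 x13 xL r0 L0 Nn0 unfolding r_def[symmetric]
    by (intro mult_mono) (auto simp: r_def)
  moreover have "L * (4/3 * (L / Nn)) * 4 = 16/3 * (L^2 / Nn)" by (simp add: power2_eq_square)
  moreover have "16/3 * (L^2 / Nn) \<le> 6 * (L^2 / Nn)"
    using Nn0 by (intro mult_right_mono) auto
  ultimately have "r + r * x * (3 + 2 * x) \<le> r + 6 * (L^2 / Nn)"
    by linarith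
  with eq show "K * Nn * (x + 2 * x^2) \<le> K^2 * Nn / M + 6 * (L^2 / Nn)"
    unfolding r_def by simp
qed


lemma prob_rig:
  assumes "k \<le> m"
  shows "measure_pmf.prob (rig n m k) A = real (card (assignments n m k \<inter> A)) / real (card (assignments n m k))"
proof -
  have "card (assignments n m k) > 0" using assms by (simp add: card_assignments)
  then have "assignments n m k \<noteq> {}" by auto
  then show ?thesis unfolding rig_def using finite_assignments by (simp add: measure_pmf_of_set)
qed

lemma part_i_n:
  assumes "1 \<le> k" "k \<le> m" "n \<ge> 1"
  shows "1 - real n * (real ((m - k) choose k) / real (m choose k)) ^ (n - 1)
           \<le> measure_pmf.prob (rig n m k) {F. \<not> has_isolated_vertex n F}"
proof -
  let ?\<Omega> = "assignments n m k"
  let ?H = "{F. has_isolated_vertex n F}"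
  define N where "N = real (m choose k)"
  define N1 where "N1 = real ((m - k) choose k)"
  have N0: "N > 0" using assms unfolding N_def by simp
  have eq: "?\<Omega> \<inter> {F. \<not> has_isolated_vertex n F} = ?\<Omega> - (?\<Omega> \<inter> ?H)" by auto
  have cle: "card (?\<Omega> \<inter> ?H) \<le> card ?\<Omega>" by (intro card_mono finite_assignments) auto
  have "real (card (?\<Omega> \<inter> {F. \<not> has_isolated_vertex n F})) = real (card ?\<Omega>) - real (card (?\<Omega> \<inter> ?H))"
    unfolding eq using cle by (simp add: card_Diff_subset finite_assignments of_nat_diff)
  then have pr: "measure_pmf.prob (rig n m k) {F. \<not> has_isolated_vertex n F} = 1 - real (card (?\<Omega> \<inter> ?H)) / N ^ n"
    using N0 by (simp add: prob_rig[OF assms(2)] card_assignments N_def diff_divide_distrib)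
  have "real (card (?\<Omega> \<inter> ?H)) \<le> real n * (N * N1 ^ (n - 1))"
    using of_nat_mono[OF first_moment[of n m k], where 'a=real] unfolding N_def N1_def by simp
  then have "real (card (?\<Omega> \<inter> ?H)) / N ^ n \<le> real n * (N * N1 ^ (n - 1)) / N ^ n"
    using N0 by (intro divide_right_mono) auto
  also have "\<dots> = real n * (N1 / N) ^ (n - 1)"
  proof -
    have "N ^ n = N * N ^ (n - 1)" using assms(3) by (cases n) simp_all
    then show ?thesis using N0 by (simp add: power_divide)
  qed
  finally show ?thesis unfolding pr N_def N1_def by simp
qed

lemma inv_alg: "(a::real) > 0 \<Longrightarrow> p > 0 \<Longrightarrow> a\<^sup>2 / (a + a\<^sup>2 / p) = inverse (inverse a + inverse p)"
proof -
  assume a0: "a > 0" and pp: "p > 0"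
  have e1: "a + a\<^sup>2 / p = a * (a + p) / p" using pp by (simp add: field_simps power2_eq_square)
  have e2: "inverse a + inverse p = (a + p) / (a * p)" using a0 pp by (simp add: field_simps)
  have "a\<^sup>2 / (a * (a + p) / p) = (a * a * p) / (a * (a + p))" by (simp add: power2_eq_square)
  also have "\<dots> = a * p / (a + p)" using a0 by simp
  finally show ?thesis unfolding e1 e2 by simp
qed

lemma part_ii_n:
  assumes "1 \<le> k" "k \<le> m" "n \<ge> 2"
    and p0: "real ((m - k) choose k) / real (m choose k) > 0"
  defines "p \<equiv> real ((m - k) choose k) / real (m choose k)"
  shows "inverse (inverse (real n * p ^ (n - 1)) + inverse p)
           \<le> measure_pmf.prob (rig n m k) {F. has_isolated_vertex n F}"
proof -
  let ?\<Omega> = "assignments n m k"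
  let ?H = "{F. has_isolated_vertex n F}"
  define N where "N = real (m choose k)"
  define N1 where "N1 = real ((m - k) choose k)"
  define N2 where "N2 = real ((m - 2 * k) choose k)"
  define q where "q = N2 / N"
  define a where "a = real n * p ^ (n - 1)"
  define C where "C = real (card (?\<Omega> \<inter> ?H))"
  define D where "D = N ^ n"
  have N0: "N > 0" using assms unfolding N_def by simp
  have D0: "D > 0" unfolding D_def using N0 by simp
  have pp: "p > 0" using p0 unfolding p_def .
  have a0: "a > 0" unfolding a_def using pp assms by simp
  have q0: "q \<ge> 0" unfolding q_def N2_def N_def by simp
  have qp: "q \<le> p^2" unfolding q_def p_def N2_def N_def using q_le_p2[OF assms(1,2)] by simp
  have N1e: "N1 = p * N" unfolding p_def N1_def N_def using N0 N_def by simp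
  have N2e: "N2 = q * N" unfolding q_def using N0 by simp
  have sm: "(real n * (N * N1 ^ (n - 1)))\<^sup>2 \<le> C * (real n * (N * N1 ^ (n - 1)) + real n * (real n - 1) * (N * N1 * N2 ^ (n - 2)))"
    using second_moment[OF assms(3), of m k] unfolding N_def N1_def N2_def C_def by simp
  define j where "j = n - 2"
  have nj: "n = Suc (Suc j)" using assms(3) j_def by simp
  have Nn: "N ^ n = N * N ^ (n - 1)" "N ^ n = N * N * N ^ (n - 2)"
    unfolding nj by simp_all
  have T: "real n * (N * N1 ^ (n - 1)) = a * D"
    unfolding a_def D_def N1e Nn(1) by (simp add: power_mult_distrib)
  have U: "N * N1 * N2 ^ (n - 2) = p * q ^ (n - 2) * D"
    unfolding D_def N1e N2e Nn(2) by (simp add: power_mult_distrib)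
  have "(a * D)\<^sup>2 \<le> C * (a * D + real n * (real n - 1) * (p * q ^ (n - 2) * D))"
    using sm unfolding T U .
  then have "D * (a\<^sup>2 * D) \<le> D * (C * (a + real n * (real n - 1) * (p * q ^ (n - 2))))"
    by (simp add: power2_eq_square algebra_simps)
  then have s1: "a\<^sup>2 * D \<le> C * (a + real n * (real n - 1) * (p * q ^ (n - 2)))"
    using D0 by simp
  have "real n * (real n - 1) * (p * q ^ (n - 2)) \<le> real n * real n * (p * (p^2) ^ (n - 2))"
  proof (rule mult_mono)
    show "real n * (real n - 1) \<le> real n * real n" by (intro mult_left_mono) auto
    show "p * q ^ (n - 2) \<le> p * (p^2) ^ (n - 2)" using pp q0 qp by (intro mult_left_mono power_mono) auto
  qed (use assms pp q0 in auto)
  also have "\<dots> = a\<^sup>2 / p"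
  proof -
    have "p * (p^2) ^ (n - 2) * p = (p ^ (n - 1))\<^sup>2"
    proof -
      have j2: "n - 2 = j" using j_def by simp
      have pj: "(p ^ j)\<^sup>2 = (p\<^sup>2) ^ j" by (simp add: power_mult[symmetric] mult.commute)
      have "(p ^ (n - 1))\<^sup>2 = (p * p ^ j)\<^sup>2" unfolding nj by simp
      also have "\<dots> = p\<^sup>2 * (p ^ j)\<^sup>2" by (simp add: power_mult_distrib)
      finally show ?thesis unfolding j2 pj by (simp add: power2_eq_square algebra_simps)
    qed
    then show ?thesis unfolding a_def using pp by (simp add: field_simps power2_eq_square)
  qed
  finally have s2: "real n * (real n - 1) * (p * q ^ (n - 2)) \<le> a\<^sup>2 / p" .
  have C0: "C \<ge> 0" unfolding C_def by simp
  have "a\<^sup>2 * D \<le> C * (a + a\<^sup>2 / p)"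
    using s1 mult_left_mono[OF add_left_mono[OF s2, of a] C0] by linarith
  then have "a\<^sup>2 \<le> (C / D) * (a + a\<^sup>2 / p)"
    using D0 by (simp add: field_simps)
  moreover have "a + a\<^sup>2 / p > 0" using a0 pp by (intro add_pos_nonneg) auto
  ultimately have "a\<^sup>2 / (a + a\<^sup>2 / p) \<le> C / D" by (simp add: divide_le_eq)
  moreover have "a\<^sup>2 / (a + a\<^sup>2 / p) = inverse (inverse a + inverse p)"
    using a0 pp by (rule inv_alg)
  moreover have "C / D = measure_pmf.prob (rig n m k) ?H"
    unfolding C_def D_def N_def by (simp add: prob_rig[OF assms(2)] card_assignments)
  ultimately show ?thesis unfolding a_def by simp
qed


lemma p_bounds_ii:
  assumes k1: "1 \<le> k" and km: "k \<le> m" and n2: "n \<ge> 2"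
    and r: "real k^2 * real n / real m \<le> ln (real n)" and L4: "ln (real n) / real n \<le> 1/4"
  defines "p \<equiv> real ((m - k) choose k) / real (m choose k)"
  shows "1 - 2 * (ln (real n) / real n) \<le> p" "p \<le> 1"
    "exp ((ln (real n) - real k^2 * real n / real m) - 6 * (ln (real n)^2 / real n)) \<le> real n * p ^ (n - 1)"
proof -
  define L where "L = ln (real n)"
  define x where "x = real k / (real m - real k)"
  have L0: "L \<ge> 0" unfolding L_def using n2 by simp
  have F: "x \<le> 1/3" "0 \<le> x" "real k * x \<le> 2 * (L / real n)" "4 * real k \<le> real m"
    "real k * real n * (x + 2 * x^2) \<le> real k^2 * real n / real m + 6 * (L^2 / real n)"
    using real_facts[of "real k" "real m" "real n" L] k1 km n2 r L4 L0 unfolding L_def x_def by auto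
  have km2: "2 * k \<le> m" using F(4) by simp
  have pl: "(1 - x) ^ k \<le> p" unfolding p_def x_def by (rule p_lower[OF k1 km2])
  have "1 + real k * (- x) \<le> (1 + (- x)) ^ k" by (rule Bernoulli_inequality) (use F in simp)
  then show "1 - 2 * (ln (real n) / real n) \<le> p" using pl F(3) unfolding L_def by simp
  have pu: "p \<le> exp (- (real k ^ 2 / real m))" "0 \<le> p" unfolding p_def using p_upper[OF k1 km] by auto
  have "exp (- (real k ^ 2 / real m)) \<le> 1" by simp
  then show p1: "p \<le> 1" using pu by linarith
  have x1: "1 - x > 0" using F by simp
  have "exp (- x - 2 * x^2) \<le> exp (ln (1 - x))"
    by (rule exp_mono, rule ln_one_minus_pos_lower_bound) (use F in auto)
  also have "\<dots> = 1 - x" using x1 by simp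
  finally have ex: "exp (- x - 2 * x^2) \<le> 1 - x" .
  have n0: "real n > 0" using n2 by simp
  have "exp ((L - real k^2 * real n / real m) - 6 * (L^2 / real n)) \<le> exp (L - real k * real n * (x + 2 * x^2))"
    using F(5) by simp
  also have "\<dots> = real n * exp (real (k * n) * (- x - 2 * x^2))"
  proof -
    have "exp (L - real k * real n * (x + 2 * x^2)) = exp L * exp (- (real k * real n * (x + 2 * x^2)))"
      by (simp add: exp_add[symmetric])
    moreover have "exp L = real n" unfolding L_def using n0 by simp
    moreover have "- (real k * real n * (x + 2 * x^2)) = real (k * n) * (- x - 2 * x^2)"
      by (simp add: algebra_simps)
    ultimately show ?thesis by simp
  qed
  also have "\<dots> = real n * exp (- x - 2 * x^2) ^ (k * n)"
    by (simp only: exp_of_nat_mult)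
  also have "\<dots> \<le> real n * (1 - x) ^ (k * n)"
    using ex by (intro mult_left_mono power_mono) auto
  also have "\<dots> = real n * ((1 - x) ^ k) ^ n" by (simp add: power_mult)
  also have "\<dots> \<le> real n * p ^ n"
    using pl x1 by (intro mult_left_mono power_mono) auto
  also have "\<dots> \<le> real n * p ^ (n - 1)"
    using pu p1 by (intro mult_left_mono power_decreasing) auto
  finally show "exp ((ln (real n) - real k^2 * real n / real m) - 6 * (ln (real n)^2 / real n)) \<le> real n * p ^ (n - 1)"
    unfolding L_def .
qed


theorem theorem2:
  fixes k m :: "nat \<Rightarrow> nat"
  assumes km: "\<And>n. 1 \<le> k n \<and> k n \<le> m n"
  shows
   "(filterlim (\<lambda>n. real (k n)^2 * real n / real (m n) - ln (real n)) at_top sequentially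
      \<longrightarrow> (\<lambda>n. measure_pmf.prob (rig n (m n) (k n)) {F. \<not> has_isolated_vertex n F})
            \<longlonglongrightarrow> 1)
  \<and> (filterlim (\<lambda>n. ln (real n) - real (k n)^2 * real n / real (m n)) at_top sequentially
      \<longrightarrow> (\<lambda>n. measure_pmf.prob (rig n (m n) (k n)) {F. has_isolated_vertex n F})
            \<longlonglongrightarrow> 1)"
proof (intro conjI impI)
  define p where "p n = real ((m n - k n) choose k n) / real (m n choose k n)" for n
  have k1: "1 \<le> k n" and kmn: "k n \<le> m n" for n using km[of n] by auto
  {
    assume h: "filterlim (\<lambda>n. real (k n)^2 * real n / real (m n) - ln (real n)) at_top sequentially"
    define g where "g n = real (k n)^2 * real n / real (m n) - ln (real n)" for n
    define lo where "lo n = 1 - (exp 1 * exp (- g n) + real n * exp (- (real n - 1)))" for n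
    have "filterlim (\<lambda>n. - g n) at_bot sequentially"
      using h unfolding g_def filterlim_uminus_at_top by simp
    then have e0: "(\<lambda>n. exp (- g n)) \<longlonglongrightarrow> 0"
      by (rule filterlim_compose[OF exp_at_bot])
    have e1: "(\<lambda>n. real n * exp (- (real n - 1))) \<longlonglongrightarrow> 0" by real_asymp
    have lo_lim: "lo \<longlonglongrightarrow> 1"
    proof -
      have "(\<lambda>n. 1 - (exp 1 * exp (- g n) + real n * exp (- (real n - 1)))) \<longlonglongrightarrow> 1 - (exp 1 * 0 + 0)"
        by (intro tendsto_intros e0 e1)
      then show ?thesis unfolding lo_def by simp
    qed
    have ev_lo: "eventually (\<lambda>n. lo n \<le> measure_pmf.prob (rig n (m n) (k n)) {F. \<not> has_isolated_vertex n F}) sequentially"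
      using eventually_ge_at_top[of "1::nat"]
    proof eventually_elim
      case (elim n)
      have pu: "0 \<le> p n" "p n \<le> exp (- (real (k n) ^ 2 / real (m n)))"
        unfolding p_def using p_upper[OF k1 kmn] by auto
      have s0: "real (k n) ^ 2 / real (m n) \<ge> 0" by simp
      have "real n * p n ^ (n - 1) \<le> exp 1 * exp (- (real n * (real (k n) ^ 2 / real (m n)) - ln (real n))) + real n * exp (- (real n - 1))"
        by (rule bound_i[OF pu elim s0])
      also have "real n * (real (k n) ^ 2 / real (m n)) - ln (real n) = g n" unfolding g_def by simp
      finally have "real n * p n ^ (n - 1) \<le> exp 1 * exp (- g n) + real n * exp (- (real n - 1))" .
      moreover have "1 - real n * p n ^ (n - 1) \<le> measure_pmf.prob (rig n (m n) (k n)) {F. \<not> has_isolated_vertex n F}"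
        unfolding p_def by (rule part_i_n[OF k1 kmn elim])
      ultimately show ?case unfolding lo_def by linarith
    qed
    have ev_up: "eventually (\<lambda>n. measure_pmf.prob (rig n (m n) (k n)) {F. \<not> has_isolated_vertex n F} \<le> 1) sequentially"
      by (simp add: measure_pmf.prob_le_1)
    show "(\<lambda>n. measure_pmf.prob (rig n (m n) (k n)) {F. \<not> has_isolated_vertex n F}) \<longlonglongrightarrow> 1"
      by (rule tendsto_sandwich[OF ev_lo ev_up lo_lim tendsto_const])
  }
  {
    assume h: "filterlim (\<lambda>n. ln (real n) - real (k n)^2 * real n / real (m n)) at_top sequentially"
    define hh where "hh n = ln (real n) - real (k n)^2 * real n / real (m n)" for n
    define a where "a n = real n * p n ^ (n - 1)" for n
    have ev1: "eventually (\<lambda>n. 0 \<le> hh n) sequentially"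
      using h unfolding hh_def filterlim_at_top by blast
    have ev2: "eventually (\<lambda>n::nat. ln (real n) / real n \<le> 1/4) sequentially" by real_asymp
    have ev3: "eventually (\<lambda>n::nat. 2 \<le> n) sequentially" by (rule eventually_ge_at_top)
    have evE: "eventually (\<lambda>n. 1 - 2 * (ln (real n) / real n) \<le> p n \<and> p n \<le> 1
        \<and> exp (hh n - 6 * (ln (real n)^2 / real n)) \<le> a n \<and> 2 \<le> n) sequentially"
      using ev1 ev2 ev3
    proof eventually_elim
      case (elim n)
      have r: "real (k n)^2 * real n / real (m n) \<le> ln (real n)" using elim(1) unfolding hh_def by simp
      show ?case using p_bounds_ii[OF k1 kmn elim(3) r elim(2)] elim(3) unfolding p_def a_def hh_def by simp
    qed
    have lb: "(\<lambda>n::nat. 1 - 2 * (ln (real n) / real n)) \<longlonglongrightarrow> 1" by real_asymp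
    have p_lim: "p \<longlonglongrightarrow> 1"
      by (rule tendsto_sandwich[OF _ _ lb tendsto_const]) (use evE in \<open>auto elim: eventually_mono\<close>)
    have t6: "(\<lambda>n::nat. - (6 * (ln (real n)^2 / real n))) \<longlonglongrightarrow> 0" by real_asymp
    have "filterlim (\<lambda>n. - (6 * (ln (real n)^2 / real n)) + hh n) at_top sequentially"
      by (rule filterlim_tendsto_add_at_top[OF t6]) (use h in \<open>simp add: hh_def\<close>)
    then have "filterlim (\<lambda>n. exp (hh n - 6 * (ln (real n)^2 / real n))) at_top sequentially"
      by (intro filterlim_compose[OF exp_at_top]) simp
    then have a_lim: "filterlim a at_top sequentially"
      by (rule filterlim_at_top_mono) (use evE in \<open>auto elim: eventually_mono\<close>)
    have lo_lim: "(\<lambda>n. inverse (inverse (a n) + inverse (p n))) \<longlonglongrightarrow> inverse (0 + inverse 1)"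
      by (intro tendsto_intros tendsto_inverse_0_at_top a_lim p_lim) auto
    have ev2': "eventually (\<lambda>n::nat. ln (real n) / real n \<le> 1/4 \<and> 1 - 2 * (ln (real n) / real n) \<le> p n \<and> 2 \<le> n) sequentially"
      using ev2 evE by eventually_elim auto
    have ev_lo: "eventually (\<lambda>n. inverse (inverse (a n) + inverse (p n)) \<le> measure_pmf.prob (rig n (m n) (k n)) {F. has_isolated_vertex n F}) sequentially"
      using ev2'
    proof eventually_elim
      case (elim n)
      have "p n > 0" using elim by linarith
      then show ?case unfolding a_def p_def using part_ii_n[OF k1 kmn] elim by (simp add: p_def)
    qed
    have ev_up: "eventually (\<lambda>n. measure_pmf.prob (rig n (m n) (k n)) {F. has_isolated_vertex n F} \<le> 1) sequentially"
      by (simp add: measure_pmf.prob_le_1)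
    show "(\<lambda>n. measure_pmf.prob (rig n (m n) (k n)) {F. has_isolated_vertex n F}) \<longlonglongrightarrow> 1"
      using tendsto_sandwich[OF ev_lo ev_up _ tendsto_const] lo_lim by simp
  }
qed

end
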